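(* Let $\mathbb P$ be the law of a stationary simple point process on $\mathbb R^d$ with finite positive intensity $m$. For every $\gamma>0$, $L\in\mathbb N$ and $z\in\mathbb R^d$, $$\mathbb E_0\big[\xi(\Lambda_L(z))^\gamma\big]\le\frac1m(2L+2)^{d\gamma}\rho_{1+\gamma}.$$
   Context: $\mathcal N$ = locally finite subsets of $\mathbb R^d$, identified with counting measures ($\xi(A)=\#(\xi\cap A)$); $\tau_x\xi=\xi-x$; stationarity: $\mathbb P(\tau_xA)=\mathbb P(A)$. Intensity $m=\mathbb E[\xi([0,1]^d)]$. $\Lambda_L(z)=z+[-L,L]^d$. $\rho_\gamma:=\mathbb E[\xi([0,1]^d)^\gamma]$ (possibly $+\infty$). The Palm distribution is $\mathbb P_0(A)=\frac1m\int d\mathbb P(\xi)\sum_{x\in\xi\cap[0,1]^d}\mathbf 1_A(\tau_x\xi)$, with expectation $\mathbb E_0$. $\mathbb N=\{0,1,2,\dots\}$. *)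

theory Defs
  imports "HOL-Probability.Probability"
begin

text \<open>Locally finite subsets of R^d (d = DIM('a)), identified with simple counting measures.\<close>
definition loc_finite :: "'a::euclidean_space set \<Rightarrow> bool" where
  "loc_finite X \<longleftrightarrow> (\<forall>K. compact K \<longrightarrow> finite (X \<inter> K))"

definition npts :: "'a set \<Rightarrow> 'a set \<Rightarrow> nat" where
  "npts \<xi> A = card (\<xi> \<inter> A)"

definition config_space :: "'a::euclidean_space set measure" where
  "config_space = sigma {X. loc_finite X}
     {{X. loc_finite X \<and> npts X A = k} | A k. A \<in> sets borel \<and> bounded A}"

definition point_process :: "'a::euclidean_space set measure \<Rightarrow> bool" where
  "point_process P \<longleftrightarrow> prob_space P \<and> sets P = sets config_space"

definition shift :: "'a::euclidean_space \<Rightarrow> 'a set \<Rightarrow> 'a set" where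
  "shift x \<xi> = (\<lambda>y. y - x) ` \<xi>"

definition stationary :: "'a::euclidean_space set measure \<Rightarrow> bool" where
  "stationary P \<longleftrightarrow> (\<forall>x. \<forall>A \<in> sets P. emeasure P (shift x ` A) = emeasure P A)"

definition unit_cube :: "'a::euclidean_space set" where
  "unit_cube = cbox 0 One"

definition Lambda :: "real \<Rightarrow> 'a::euclidean_space \<Rightarrow> 'a set" where
  "Lambda L z = cbox (z - L *\<^sub>R One) (z + L *\<^sub>R One)"

definition intensity :: "'a::euclidean_space set measure \<Rightarrow> ennreal" where
  "intensity P = (\<integral>\<^sup>+ \<xi>. of_nat (npts \<xi> unit_cube) \<partial>P)"

definition rho :: "'a::euclidean_space set measure \<Rightarrow> real \<Rightarrow> ennreal" where
  "rho P \<gamma> = (\<integral>\<^sup>+ \<xi>. ennreal (real (npts \<xi> unit_cube) powr \<gamma>) \<partial>P)"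

definition palm_expectation ::
  "'a::euclidean_space set measure \<Rightarrow> ('a set \<Rightarrow> ennreal) \<Rightarrow> ennreal" where
  "palm_expectation P f =
     (\<integral>\<^sup>+ \<xi>. (\<Sum>x \<in> \<xi> \<inter> unit_cube. f (shift x \<xi>)) \<partial>P) / intensity P"

end

theory Submission
  imports Defs
begin


lemma young_scaled:
  fixes u v c g :: real
  assumes "u \<ge> 0" "v \<ge> 0" "c > 0" "g > 0"
  shows "u * v powr g \<le> c powr g * u powr (1+g) / (1+g) + (g/(1+g)) * v powr (1+g) / c"
proof -
  define p where "p = 1 + g"
  define q where "q = p / g"
  have p1: "p > 1" "q > 1" using assms by (auto simp: p_def q_def)
  have pq: "1/p + 1/q = 1" using assms by (simp add: p_def q_def field_simps)
  define a where "a = c powr (g/p) * u"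
  define b where "b = v powr g / c powr (g/p)"
  have ab: "a \<ge> 0" "b \<ge> 0" using assms by (auto simp: a_def b_def)
  have "a * b = u * v powr g"
    using assms by (simp add: a_def b_def field_simps)
  moreover have "a powr p = c powr g * u powr p"
    using assms p1 by (simp add: a_def powr_mult powr_powr)
  moreover have "b powr q = v powr p / c"
  proof -
    have e1: "g * q = p" "g / p * q = 1" using assms by (auto simp: q_def p_def)
    show ?thesis using assms p1 by (simp add: b_def powr_divide powr_powr e1)
  qed
  moreover have "g / p = 1 / q" using assms by (simp add: p_def q_def)
  ultimately show ?thesis
    using Youngs_inequality[OF p1 pq ab] by (simp add: p_def[symmetric] field_simps)
qed

lemma power_mean_young:
  fixes t :: "'k \<Rightarrow> real" and g :: real
  assumes "finite K" "K \<noteq> {}" "\<And>k. k \<in> K \<Longrightarrow> t k \<ge> 0" "g > 0"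
  shows "(sum t K) powr (1+g) \<le> real (card K) powr g * (\<Sum>k\<in>K. t k powr (1+g))"
proof -
  define T where "T = sum t K"
  define N where "N = real (card K)"
  have N: "N > 0" using assms by (simp add: N_def card_gt_0_iff)
  have T: "T \<ge> 0" using assms by (simp add: T_def sum_nonneg)
  have "T powr (1+g) = T * T powr g" using T by (simp add: powr_add)
  also have "\<dots> = (\<Sum>k\<in>K. t k * T powr g)" by (simp add: T_def sum_distrib_right)
  also have "\<dots> \<le> (\<Sum>k\<in>K. N powr g * t k powr (1+g) / (1+g) + (g/(1+g)) * T powr (1+g) / N)"
    by (rule sum_mono, rule young_scaled) (use assms T N in auto)
  also have "\<dots> = N powr g * (\<Sum>k\<in>K. t k powr (1+g)) / (1+g) + (g/(1+g)) * T powr (1+g)"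
    using N by (simp add: sum.distrib sum_divide_distrib[symmetric] sum_distrib_left[symmetric] N_def)
  finally have X: "T powr (1+g) \<le> N powr g * (\<Sum>k\<in>K. t k powr (1+g)) / (1+g) + (g/(1+g)) * T powr (1+g)" .
  define X where "X = T powr (1+g)"
  define Y where "Y = N powr g * (\<Sum>k\<in>K. t k powr (1+g))"
  have "(1+g) * X \<le> (1+g) * (Y / (1+g) + (g/(1+g)) * X)"
    using X assms unfolding X_def Y_def by (intro mult_left_mono) auto
  also have "\<dots> = Y + g * X"
  proof -
    have h: "1+g \<noteq> 0" using assms by simp
    show ?thesis by (simp add: distrib_left h)
  qed
  finally have "X \<le> Y" by (simp add: algebra_simps)
  then show ?thesis by (simp add: X_def Y_def T_def N_def)
qed

lemma main_real:
  fixes t :: "'k \<Rightarrow> real" and g a :: real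
  assumes "finite K" "K \<noteq> {}" "\<And>k. k \<in> K \<Longrightarrow> t k \<ge> 0" "g > 0" "a \<ge> 0"
  shows "a * (sum t K) powr g \<le> real (card K) powr g * a powr (1+g) / (1+g)
     + (g/(1+g)) * real (card K) powr g * (\<Sum>k\<in>K. t k powr (1+g)) / real (card K)"
proof -
  have N: "real (card K) > 0" using assms by (simp add: card_gt_0_iff)
  have T: "sum t K \<ge> 0" using assms by (simp add: sum_nonneg)
  have "a * (sum t K) powr g \<le> real (card K) powr g * a powr (1+g) / (1+g) + (g/(1+g)) * (sum t K) powr (1+g) / real (card K)"
    by (rule young_scaled) (use assms N T in auto)
  also have "\<dots> \<le> real (card K) powr g * a powr (1+g) / (1+g)
     + (g/(1+g)) * (real (card K) powr g * (\<Sum>k\<in>K. t k powr (1+g))) / real (card K)"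
    using power_mean_young[OF assms(1-4)] N assms
    by (intro add_left_mono divide_right_mono mult_left_mono) auto
  finally show ?thesis by simp
qed


lemma space_P: "point_process P \<Longrightarrow> space P = {X. loc_finite X}"
proof -
  assume "point_process P"
  then have "space P = space config_space"
    unfolding point_process_def by (metis sets_eq_imp_space_eq)
  also have "\<dots> = {X. loc_finite X}"
    unfolding config_space_def by (rule space_measure_of) auto
  finally show ?thesis .
qed

lemma npts_meas:
  assumes "point_process P" "A \<in> sets borel" "bounded A"
  shows "(\<lambda>\<xi>. npts \<xi> A) \<in> measurable P (count_space UNIV)"
proof (subst measurable_count_space_eq2_countable, safe)
  fix j :: nat
  have "(\<lambda>\<xi>. npts \<xi> A) -` {j} \<inter> space P = {X. loc_finite X \<and> npts X A = j}"
    using space_P[OF assms(1)] by auto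
  also have "\<dots> \<in> sets config_space"
    unfolding config_space_def
    apply (subst sets_measure_of)
     apply auto[1]
    apply (rule sigma_sets.Basic)
    using assms(2,3) by blast
  finally show "(\<lambda>\<xi>. npts \<xi> A) -` {j} \<inter> space P \<in> sets P"
    using assms(1) unfolding point_process_def by simp
qed simp

lemma shift_inter: "shift c \<xi> \<inter> A = (\<lambda>y. y - c) ` (\<xi> \<inter> (+) c ` A)"
  unfolding shift_def by (auto simp: image_iff) (metis add.commute diff_add_cancel)+

lemma npts_shift: "npts (shift c \<xi>) A = npts \<xi> ((+) c ` A)"
  unfolding npts_def shift_inter by (rule card_image) (auto simp: inj_on_def)

lemma loc_finite_shift: "loc_finite \<xi> \<Longrightarrow> loc_finite (shift c \<xi>)"
  unfolding loc_finite_def shift_inter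
  by (auto intro!: finite_imageI compact_translation)

lemma shift_shift: "shift (-c) (shift c \<xi>) = \<xi>"
  unfolding shift_def by (simp add: image_image)

lemma transl_borel:
  fixes A :: "'a::euclidean_space set"
  assumes "A \<in> sets borel" shows "(+) c ` A \<in> sets borel"
proof -
  have "(+) c ` A = (\<lambda>x. x - c) -` A \<inter> space borel"
    by (auto simp: image_iff) (metis add.commute diff_add_cancel)
  also have "\<dots> \<in> sets borel"
    by (rule measurable_sets[OF _ assms]) (intro borel_measurable_continuous_onI continuous_intros)
  finally show ?thesis .
qed

lemma stat_int:
  fixes A :: "'a::euclidean_space set"
  assumes P: "point_process P" and st: "stationary P" and A: "A \<in> sets borel" "bounded A"
  shows "(\<integral>\<^sup>+\<xi>. h (npts \<xi> ((+) c ` A)) \<partial>P) = (\<integral>\<^sup>+\<xi>. h (npts \<xi> A) \<partial>P)"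
proof -
  have A': "(+) c ` A \<in> sets borel" "bounded ((+) c ` A)"
    using A by (auto intro: transl_borel bounded_translation)
  note m1 = npts_meas[OF P A'] and m0 = npts_meas[OF P A]
  have eq: "distr P (count_space UNIV) (\<lambda>\<xi>. npts \<xi> ((+) c ` A)) = distr P (count_space UNIV) (\<lambda>\<xi>. npts \<xi> A)"
  proof (rule measure_eqI_countable[where A=UNIV])
    fix j :: nat
    have lev: "(\<lambda>\<xi>. npts \<xi> ((+) c ` A)) -` {j} \<inter> space P = shift (-c) ` ((\<lambda>\<xi>. npts \<xi> A) -` {j} \<inter> space P)"
    proof (intro equalityI subsetI)
      fix \<xi> assume "\<xi> \<in> (\<lambda>\<xi>. npts \<xi> ((+) c ` A)) -` {j} \<inter> space P"
      then have h: "\<xi> \<in> space P" "npts \<xi> ((+) c ` A) = j" by auto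
      have "shift c \<xi> \<in> (\<lambda>\<xi>. npts \<xi> A) -` {j} \<inter> space P"
        using h space_P[OF P] by (auto simp: npts_shift intro: loc_finite_shift)
      then show "\<xi> \<in> shift (-c) ` ((\<lambda>\<xi>. npts \<xi> A) -` {j} \<inter> space P)"
        by (rule image_eqI[where x="shift c \<xi>", rotated]) (simp add: shift_shift)
    next
      fix \<xi> assume "\<xi> \<in> shift (-c) ` ((\<lambda>\<xi>. npts \<xi> A) -` {j} \<inter> space P)"
      then obtain \<eta> where h: "\<eta> \<in> space P" "npts \<eta> A = j" and xi: "\<xi> = shift (-c) \<eta>" by auto
      have "(+) (-c) ` (+) c ` A = A" by (simp add: image_image)
      then have "npts (shift (-c) \<eta>) ((+) c ` A) = j"
        using h by (simp add: npts_shift)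
      moreover have "shift (-c) \<eta> \<in> space P" using h space_P[OF P] by (auto intro: loc_finite_shift)
      ultimately show "\<xi> \<in> (\<lambda>\<xi>. npts \<xi> ((+) c ` A)) -` {j} \<inter> space P" using xi by simp
    qed
    have "(\<lambda>\<xi>. npts \<xi> A) -` {j} \<inter> space P \<in> sets P"
      using m0 by (rule measurable_sets) simp
    then show "emeasure (distr P (count_space UNIV) (\<lambda>\<xi>. npts \<xi> ((+) c ` A))) {j} =
          emeasure (distr P (count_space UNIV) (\<lambda>\<xi>. npts \<xi> A)) {j}"
      using st unfolding stationary_def
      by (simp add: emeasure_distr m0 m1 lev)
  qed auto
  have "(\<integral>\<^sup>+\<xi>. h (npts \<xi> ((+) c ` A)) \<partial>P) = (\<integral>\<^sup>+j. h j \<partial>distr P (count_space UNIV) (\<lambda>\<xi>. npts \<xi> ((+) c ` A)))"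
    by (simp add: nn_integral_distr m1)
  also have "\<dots> = (\<integral>\<^sup>+\<xi>. h (npts \<xi> A) \<partial>P)"
    unfolding eq by (simp add: nn_integral_distr m0)
  finally show ?thesis .
qed



lemma cover:
  fixes z y :: "'a::euclidean_space" and L :: nat
  assumes "y \<in> cbox (z - real L *\<^sub>R One) (z + (real L + 1) *\<^sub>R One)"
  shows "\<exists>k \<in> PiE Basis (\<lambda>_. {-int L .. int L + 1}).
           y \<in> (+) (z + (\<Sum>b\<in>Basis. of_int (k b) *\<^sub>R b)) ` unit_cube"
proof -
  define k where "k = restrict (\<lambda>b. \<lfloor>(y - z) \<bullet> b\<rfloor>) Basis"
  have yb: "- real L \<le> (y - z) \<bullet> b \<and> (y - z) \<bullet> b \<le> real L + 1" if "b \<in> Basis" for b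
    using assms that by (auto simp: mem_box inner_diff_left algebra_simps)
  have kK: "k \<in> PiE Basis (\<lambda>_. {-int L .. int L + 1})"
  proof -
    have "- int L \<le> \<lfloor>(y - z) \<bullet> b\<rfloor> \<and> \<lfloor>(y - z) \<bullet> b\<rfloor> \<le> int L + 1" if "b \<in> Basis" for b
      using yb[OF that] by (simp add: le_floor_iff floor_le_iff)
    then show ?thesis by (auto simp: k_def)
  qed
  have ci: "(z + (\<Sum>b\<in>Basis. of_int (k b) *\<^sub>R b)) \<bullet> i = z \<bullet> i + of_int (k i)" if "i \<in> Basis" for i
    using that by (simp add: inner_add_left inner_sum_left inner_Basis if_distrib cong: if_cong)
  have "y - (z + (\<Sum>b\<in>Basis. of_int (k b) *\<^sub>R b)) \<in> unit_cube"
    unfolding unit_cube_def mem_box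
  proof (intro ballI)
    fix i :: 'a assume i: "i \<in> Basis"
    have "k i = \<lfloor>(y - z) \<bullet> i\<rfloor>" using i by (simp add: k_def)
    have f1: "of_int \<lfloor>y \<bullet> i - z \<bullet> i\<rfloor> \<le> y \<bullet> i - z \<bullet> i" by (rule of_int_floor_le)
    have f2: "y \<bullet> i - z \<bullet> i - 1 < of_int \<lfloor>y \<bullet> i - z \<bullet> i\<rfloor>" by (rule real_of_int_floor_gt_diff_one)
    have kk: "k i = \<lfloor>y \<bullet> i - z \<bullet> i\<rfloor>" using i by (simp add: k_def inner_diff_left)
    show "0 \<bullet> i \<le> (y - (z + (\<Sum>b\<in>Basis. of_int (k b) *\<^sub>R b))) \<bullet> i \<and>
      (y - (z + (\<Sum>b\<in>Basis. of_int (k b) *\<^sub>R b))) \<bullet> i \<le> One \<bullet> i"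
    proof -
      have e: "(y - (z + (\<Sum>b\<in>Basis. of_int (k b) *\<^sub>R b))) \<bullet> i = y \<bullet> i - z \<bullet> i - of_int \<lfloor>y \<bullet> i - z \<bullet> i\<rfloor>"
        by (simp add: inner_diff_left ci[OF i] kk)
      have g: "0 \<le> y \<bullet> i - z \<bullet> i - of_int \<lfloor>y \<bullet> i - z \<bullet> i\<rfloor>" "y \<bullet> i - z \<bullet> i - of_int \<lfloor>y \<bullet> i - z \<bullet> i\<rfloor> \<le> 1"
        using f1 f2 by linarith+
      have o: "One \<bullet> i = (1::real)" using i by simp
      show ?thesis
        unfolding e o inner_zero_left using g by blast
    qed
  qed
  then have "y \<in> (+) (z + (\<Sum>b\<in>Basis. of_int (k b) *\<^sub>R b)) ` unit_cube"
    by (rule image_eqI[rotated]) simp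
  with kK show ?thesis by blast
qed

lemma box_sub:
  fixes z x :: "'a::euclidean_space" and L :: nat
  assumes "x \<in> unit_cube"
  shows "(+) x ` Lambda (real L) z \<subseteq> cbox (z - real L *\<^sub>R One) (z + (real L + 1) *\<^sub>R One)"
proof -
  have "(+) x ` Lambda (real L) z = cbox (x + (z - real L *\<^sub>R One)) (x + (z + real L *\<^sub>R One))"
    unfolding Lambda_def by (simp add: cbox_translation)
  also have "\<dots> \<subseteq> cbox (z - real L *\<^sub>R One) (z + (real L + 1) *\<^sub>R One)"
    using assms unfolding unit_cube_def
    by (subst subset_box(1)) (auto simp: mem_box inner_add_left inner_diff_left algebra_simps)
  finally show ?thesis .
qed

lemma card_K: "card (PiE (Basis::'a::euclidean_space set) (\<lambda>_. {-int L .. int L + 1})) = (2 * L + 2) ^ DIM('a)"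
  by (simp add: card_PiE nat_add_distrib nat_mult_distrib)


theorem lemma8p2:
  fixes P :: "'a::euclidean_space set measure"
    and \<gamma> :: real and L :: nat and z :: 'a
  assumes "point_process P"
    and "stationary P"
    and "0 < intensity P" and "intensity P < \<infinity>"
    and "\<gamma> > 0"
  shows "palm_expectation P (\<lambda>\<xi>. ennreal (real (npts \<xi> (Lambda (real L) z)) powr \<gamma>))
         \<le> ennreal ((2 * real L + 2) powr (real DIM('a) * \<gamma>)) * rho P (1 + \<gamma>) / intensity P"
proof -
  note P = assms(1) and st = assms(2) and g = assms(5)
  define K where "K = PiE (Basis::'a set) (\<lambda>_. {-int L .. int L + 1})"
  define cc where "cc k = z + (\<Sum>b\<in>Basis. of_int (k b) *\<^sub>R b)" for k :: "'a \<Rightarrow> int"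
  define B where "B = cbox (z - real L *\<^sub>R One) (z + (real L + 1) *\<^sub>R One)"
  define p where "p = 1 + \<gamma>"
  define N where "N = real (card K)"
  define c1 where "c1 = N powr \<gamma> / p"
  define c2 where "c2 = (\<gamma> / p) * N powr \<gamma> / N"
  have finK: "finite K" and neK: "K \<noteq> {}" by (auto simp: K_def PiE_eq_empty_iff intro!: finite_PiE)
  have Npos: "N > 0" using finK neK by (simp add: N_def card_gt_0_iff)
  have QB: "unit_cube \<in> sets borel" "bounded unit_cube" by (auto simp: unit_cube_def)
  have cover': "B \<subseteq> (\<Union>k\<in>K. (+) (cc k) ` unit_cube)"
    using cover[of _ z L] unfolding B_def K_def cc_def by blast
  have pw: "(\<Sum>x\<in>\<xi> \<inter> unit_cube. ennreal (real (npts (shift x \<xi>) (Lambda (real L) z)) powr \<gamma>))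
     \<le> ennreal c1 * ennreal (real (npts \<xi> unit_cube) powr p)
       + ennreal c2 * (\<Sum>k\<in>K. ennreal (real (npts \<xi> ((+) (cc k) ` unit_cube)) powr p))"
    if xi: "\<xi> \<in> space P" for \<xi>
  proof -
    have lf: "loc_finite \<xi>" using xi space_P[OF P] by auto
    have cpt: "compact ((+) (cc k) ` unit_cube)" for k
      unfolding unit_cube_def by (intro compact_translation) auto
    have finB: "finite (\<xi> \<inter> B)" using lf unfolding loc_finite_def B_def by auto
    have finC: "finite (\<xi> \<inter> (+) (cc k) ` unit_cube)" for k
      using lf cpt unfolding loc_finite_def by auto
    define T where "T = (\<Sum>k\<in>K. real (npts \<xi> ((+) (cc k) ` unit_cube)))"
    have ST: "real (npts \<xi> B) \<le> T"
    proof -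
      have "\<xi> \<inter> B \<subseteq> (\<Union>k\<in>K. \<xi> \<inter> (+) (cc k) ` unit_cube)" using cover' by blast
      then have "card (\<xi> \<inter> B) \<le> card (\<Union>k\<in>K. \<xi> \<inter> (+) (cc k) ` unit_cube)"
        using finK finC by (intro card_mono finite_UN_I) auto
      also have "\<dots> \<le> (\<Sum>k\<in>K. card (\<xi> \<inter> (+) (cc k) ` unit_cube))"
        by (rule card_UN_le[OF finK])
      finally show ?thesis unfolding T_def npts_def by (simp flip: of_nat_sum)
    qed
    have tm: "real (npts (shift x \<xi>) (Lambda (real L) z)) powr \<gamma> \<le> T powr \<gamma>"
      if x: "x \<in> \<xi> \<inter> unit_cube" for x
    proof -
      have "npts (shift x \<xi>) (Lambda (real L) z) \<le> npts \<xi> B"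
        unfolding npts_shift unfolding npts_def using box_sub[of x L z] x finB unfolding B_def
        by (intro card_mono) auto
      then show ?thesis using ST g by (intro powr_mono2) auto
    qed
    have "(\<Sum>x\<in>\<xi> \<inter> unit_cube. real (npts (shift x \<xi>) (Lambda (real L) z)) powr \<gamma>)
        \<le> (\<Sum>x\<in>\<xi> \<inter> unit_cube. T powr \<gamma>)"
      by (rule sum_mono) (rule tm)
    also have "\<dots> = real (npts \<xi> unit_cube) * T powr \<gamma>" by (simp add: npts_def)
    also have "\<dots> \<le> c1 * real (npts \<xi> unit_cube) powr p
        + c2 * (\<Sum>k\<in>K. real (npts \<xi> ((+) (cc k) ` unit_cube)) powr p)"
      using main_real[OF finK neK _ g, of "\<lambda>k. real (npts \<xi> ((+) (cc k) ` unit_cube))" "real (npts \<xi> unit_cube)"]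
      unfolding T_def c1_def c2_def p_def N_def by (simp add: field_simps)
    finally have R: "(\<Sum>x\<in>\<xi> \<inter> unit_cube. real (npts (shift x \<xi>) (Lambda (real L) z)) powr \<gamma>) \<le> \<dots>" .
    have c12: "c1 \<ge> 0" "c2 \<ge> 0" using Npos g by (auto simp: c1_def c2_def p_def)
    have "(\<Sum>x\<in>\<xi> \<inter> unit_cube. ennreal (real (npts (shift x \<xi>) (Lambda (real L) z)) powr \<gamma>))
       = ennreal (\<Sum>x\<in>\<xi> \<inter> unit_cube. real (npts (shift x \<xi>) (Lambda (real L) z)) powr \<gamma>)"
      by simp
    also have "\<dots> \<le> ennreal (c1 * real (npts \<xi> unit_cube) powr p
        + c2 * (\<Sum>k\<in>K. real (npts \<xi> ((+) (cc k) ` unit_cube)) powr p))"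
      by (rule ennreal_leI[OF R])
    also have "\<dots> = ennreal c1 * ennreal (real (npts \<xi> unit_cube) powr p)
       + ennreal c2 * (\<Sum>k\<in>K. ennreal (real (npts \<xi> ((+) (cc k) ` unit_cube)) powr p))"
      using c12 by (simp add: ennreal_plus ennreal_mult sum_nonneg)
    finally show ?thesis .
  qed
  have meas: "(\<lambda>\<xi>. ennreal (real (npts \<xi> A) powr p)) \<in> borel_measurable P"
    if "A \<in> sets borel" "bounded A" for A :: "'a set"
    by (rule measurable_compose[OF npts_meas[OF P that]]) (simp add: measurable_count_space_eq1)
  have measC: "(\<lambda>\<xi>. ennreal (real (npts \<xi> ((+) (cc k) ` unit_cube)) powr p)) \<in> borel_measurable P" for k
    using QB by (intro meas transl_borel bounded_translation)
  have intC: "(\<integral>\<^sup>+\<xi>. ennreal (real (npts \<xi> ((+) (cc k) ` unit_cube)) powr p) \<partial>P) = rho P (1 + \<gamma>)" for k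
    unfolding rho_def p_def using stat_int[OF P st QB, of "\<lambda>j. ennreal (real j powr (1+\<gamma>))" "cc k"] by simp
  have "(\<integral>\<^sup>+\<xi>. (\<Sum>x\<in>\<xi> \<inter> unit_cube. ennreal (real (npts (shift x \<xi>) (Lambda (real L) z)) powr \<gamma>)) \<partial>P)
    \<le> (\<integral>\<^sup>+\<xi>. ennreal c1 * ennreal (real (npts \<xi> unit_cube) powr p)
       + ennreal c2 * (\<Sum>k\<in>K. ennreal (real (npts \<xi> ((+) (cc k) ` unit_cube)) powr p)) \<partial>P)"
    by (rule nn_integral_mono) (rule pw)
  also have "\<dots> = ennreal c1 * rho P (1 + \<gamma>) + ennreal c2 * (\<Sum>k\<in>K. rho P (1 + \<gamma>))"
  proof -
    have intQ: "(\<integral>\<^sup>+\<xi>. ennreal (real (npts \<xi> unit_cube) powr p) \<partial>P) = rho P (1 + \<gamma>)"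
      by (simp add: rho_def p_def)
    have m2: "(\<lambda>\<xi>. ennreal c2 * (\<Sum>k\<in>K. ennreal (real (npts \<xi> ((+) (cc k) ` unit_cube)) powr p))) \<in> borel_measurable P"
      using measC by (intro borel_measurable_times_ennreal borel_measurable_sum) auto
    have m1: "(\<lambda>\<xi>. ennreal c1 * ennreal (real (npts \<xi> unit_cube) powr p)) \<in> borel_measurable P"
      using meas[OF QB] by (intro borel_measurable_times_ennreal) auto
    show ?thesis
      apply (subst nn_integral_add[OF m1 m2])
      apply (subst nn_integral_cmult[OF meas[OF QB]])
      apply (subst nn_integral_cmult)
       apply (intro borel_measurable_sum measC)
      apply (subst nn_integral_sum)
       apply (rule measC)
      apply (simp only: intQ intC)
      done
  qed
  also have "\<dots> = ennreal (c1 + c2 * N) * rho P (1 + \<gamma>)"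
  proof -
    have c12: "c1 \<ge> 0" "c2 \<ge> 0" using Npos g by (auto simp: c1_def c2_def p_def)
    have e: "ennreal (c1 + c2 * N) = ennreal c1 + ennreal c2 * of_nat (card K)"
      using c12 Npos by (simp add: ennreal_plus ennreal_mult N_def ennreal_of_nat_eq_real_of_nat)
    show ?thesis unfolding e sum_constant by (simp only: algebra_simps)
  qed
  also have "c1 + c2 * N = N powr \<gamma>"
  proof -
    have "c2 * N = (\<gamma> / p) * N powr \<gamma>" using Npos by (simp add: c2_def)
    then have "c1 + c2 * N = N powr \<gamma> * ((1 + \<gamma>) / p)" by (simp add: c1_def algebra_simps add_divide_distrib)
    also have "(1 + \<gamma>) / p = 1" using g by (simp add: p_def)
    finally show ?thesis by simp
  qed
  also have "N powr \<gamma> = (2 * real L + 2) powr (real DIM('a) * \<gamma>)"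
  proof -
    have "N = (2 * real L + 2) ^ DIM('a)" unfolding N_def K_def card_K by (simp add: add.commute)
    also have "\<dots> = (2 * real L + 2) powr real DIM('a)" by (simp add: powr_realpow)
    finally show ?thesis by (simp add: powr_powr)
  qed
  finally show ?thesis unfolding palm_expectation_def by (rule divide_right_mono_ennreal)
qed

end
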